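(* For $n\ge 2$, $$\sum_{v\in A_n}x^{\ell_{T(A_n)}(v)}=\sum_{k=0}^{n}a(n,k)\,x^k=\prod_{t=2}^{n-1}(1+tx).$$
   Context: $A_n$ is the alternating group on $\{1,\dots,n\}$, $T(A_n)=\{(1\,2)(i\,j)\mid 1\le i<j\le n\}$, $\ell_{T(A_n)}(v)=\min\{r\ge 0\mid v=t_1\cdots t_r,\ t_i\in T(A_n)\}$, and $a(n,k)$ is the number of $v\in A_n$ with $\ell_{T(A_n)}(v)=k$. An empty product equals $1$. *)

theory Defs
  imports "HOL-Combinatorics.Combinatorics"
begin

definition alt_grp :: "nat \<Rightarrow> (nat \<Rightarrow> nat) set" where
  "alt_grp n = {p. p permutes {1..n} \<and> evenperm p}"

definition T_alt :: "nat \<Rightarrow> (nat \<Rightarrow> nat) set" where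
  "T_alt n = {transpose 1 2 \<circ> transpose i j | i j. 1 \<le> i \<and> i < j \<and> j \<le> n}"

definition lenT :: "nat \<Rightarrow> (nat \<Rightarrow> nat) \<Rightarrow> nat" where
  "lenT n v = (LEAST r. \<exists>ts. length ts = r \<and> set ts \<subseteq> T_alt n \<and> v = foldr (\<circ>) ts id)"

definition a_cnt :: "nat \<Rightarrow> nat \<Rightarrow> nat" where
  "a_cnt n k = card {v \<in> alt_grp n. lenT n v = k}"

end

theory Submission
  imports Defs
begin

fun N :: "nat \<Rightarrow> (nat \<Rightarrow> nat) \<Rightarrow> nat" where
  "N 0 w = 0"
| "N (Suc n) w = (if w (Suc n) = Suc n then N n w
     else Suc (N n (transpose (w (Suc n)) (Suc n) \<circ> w)))"

lemma ins: "{1..Suc n} = insert (Suc n) {1..n}" by auto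

lemma perm_Suc_fix:
  assumes "w permutes {1..Suc n}" "w (Suc n) = Suc n"
  shows "w permutes {1..n}"
proof -
  have "transpose (Suc n) (w (Suc n)) \<circ> w permutes {1..n}"
    using permutes_insert_lemma[of w "Suc n" "{1..n}"] assms(1) unfolding ins by blast
  then show ?thesis using assms(2) by simp
qed
lemma perm_Suc_strip:
  assumes "w permutes {1..Suc n}"
  shows "transpose (w (Suc n)) (Suc n) \<circ> w permutes {1..n}"
proof -
  have "transpose (Suc n) (w (Suc n)) \<circ> w permutes {1..n}"
    using permutes_insert_lemma[of w "Suc n" "{1..n}"] assms(1) unfolding ins by blast
  then show ?thesis by (metis transpose_commute)
qed

lemma perm_val: "w permutes {1..n} \<Longrightarrow> x \<in> {1..n} \<Longrightarrow> w x \<in> {1..n}"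
  by (rule iffD2[OF permutes_in_image])

lemma N_lb:
  "w permutes {1..n} \<Longrightarrow> a \<in> {1..n} \<Longrightarrow> b \<in> {1..n} \<Longrightarrow>
   N n (transpose a b \<circ> w) \<le> Suc (N n w)"
proof (induction n arbitrary: w a b)
  case 0
  then show ?case by simp
next
  case (Suc n)
  define m where "m = Suc n"
  define q where "q = w m"
  have qm: "q \<in> {1..m}" using perm_val[OF Suc.prems(1), of m] unfolding q_def m_def by auto
  have key: "N m (transpose a m \<circ> w) \<le> Suc (N m w)" if a: "a \<in> {1..n}" for a
  proof -
    have am: "a \<noteq> m" using a m_def by auto
    show ?thesis
    proof (cases "q = m")
      case True
      have "N m (transpose a m \<circ> w) = Suc (N n (transpose a m \<circ> (transpose a m \<circ> w)))"
        using True am unfolding m_def q_def by simp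
      also have "\<dots> = Suc (N n w)"
      proof -
        have e: "transpose a m \<circ> (transpose a m \<circ> w) = w" by (simp add: fun_eq_iff)
        show ?thesis by (simp only: e)
      qed
      also have "\<dots> = Suc (N m w)" using True unfolding m_def q_def by simp
      finally show ?thesis by simp
    next
      case False
      note qnm = False
      show ?thesis
      proof (cases "q = a")
        case True
        have "N m (transpose a m \<circ> w) = N n (transpose a m \<circ> w)"
          using True am unfolding m_def q_def by simp
        also have "Suc \<dots> = N m w" using True am unfolding m_def q_def by simp
        finally show ?thesis by simp
      next
        case False
        have w': "transpose q m \<circ> w permutes {1..n}"
          using perm_Suc_strip[OF Suc.prems(1)] unfolding q_def m_def .
        have qn: "q \<in> {1..n}" using qm qnm m_def by auto
        have eq: "transpose q m \<circ> (transpose a m \<circ> w) = transpose a q \<circ> (transpose q m \<circ> w)"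
          using False qnm am by (auto simp: fun_eq_iff transpose_def)
        have "N m (transpose a m \<circ> w) = Suc (N n (transpose q m \<circ> (transpose a m \<circ> w)))"
          using False qnm am unfolding m_def q_def by simp
        also have "\<dots> \<le> Suc (Suc (N n (transpose q m \<circ> w)))"
          unfolding eq using Suc.IH[OF w' a qn] Suc_le_mono by presburger
        also have "\<dots> = Suc (N m w)" using qnm unfolding m_def q_def by simp
        finally show ?thesis .
      qed
    qed
  qed
  show ?case
  proof (cases "a = b")
    case True then show ?thesis by simp
  next
    case False
    show ?thesis
    proof (cases "a = m \<or> b = m")
      case True
      then show ?thesis
      proof
        assume am: "a = m"
        have bn: "b \<in> {1..n}" using am False Suc.prems(3) m_def by auto
        have tr: "transpose a b = transpose b m" by (metis am transpose_commute)
        show ?thesis using key[OF bn] unfolding tr m_def by blast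
      next
        assume bm: "b = m"
        have an: "a \<in> {1..n}" using bm False Suc.prems(2) m_def by auto
        show ?thesis using key[OF an] unfolding bm m_def by blast
      qed
    next
      case False
      note ab = False
      have an: "a \<in> {1..n}" "b \<in> {1..n}" using False Suc.prems(2,3) m_def by auto
      show ?thesis
      proof (cases "q = m")
        case True
        have w': "w permutes {1..n}" using perm_Suc_fix Suc.prems(1) True unfolding q_def m_def by blast
        have "N m (transpose a b \<circ> w) = N n (transpose a b \<circ> w)"
          using True ab unfolding m_def q_def by simp
        also have "\<dots> \<le> Suc (N n w)" using Suc.IH[OF w' an] .
        also have "\<dots> = Suc (N m w)" using True unfolding m_def q_def by simp
        finally show ?thesis unfolding m_def .
      next
        case False
        have w': "transpose q m \<circ> w permutes {1..n}"
          using perm_Suc_strip[OF Suc.prems(1)] unfolding q_def m_def .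
        have ne: "transpose a b q \<noteq> m" using False ab by (auto simp: transpose_def)
        have eq: "transpose (transpose a b q) m \<circ> (transpose a b \<circ> w) = transpose a b \<circ> (transpose q m \<circ> w)"
          using ab by (auto simp: fun_eq_iff transpose_def)
        have "N m (transpose a b \<circ> w) = Suc (N n (transpose (transpose a b q) m \<circ> (transpose a b \<circ> w)))"
          using ne unfolding m_def q_def by simp
        also have "\<dots> \<le> Suc (Suc (N n (transpose q m \<circ> w)))"
          unfolding eq using Suc.IH[OF w' an] Suc_le_mono by presburger
        also have "\<dots> = Suc (N m w)" using False unfolding m_def q_def by simp
        finally show ?thesis unfolding m_def .
      qed
    qed
  qed
qed

lemma N_id: "N n id = 0"
  by (induction n) simp_all

lemma fC: "foldr (\<circ>) (r#rs) (id::'a\<Rightarrow>'a) = r \<circ> foldr (\<circ>) rs id" by simp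
lemma fN: "foldr (\<circ>) [] (id::'a\<Rightarrow>'a) = id" by simp

definition Tr :: "nat \<Rightarrow> (nat \<Rightarrow> nat) set" where
  "Tr n = {transpose a b | a b. a \<in> {1..n} \<and> b \<in> {1..n} \<and> a \<noteq> b}"

lemma Tr_mono: "Tr n \<subseteq> Tr (Suc n)"
  unfolding Tr_def by fastforce

lemma prod_perm: "set rs \<subseteq> Tr n \<Longrightarrow> foldr (\<circ>) rs id permutes {1..n}"
proof (induction rs)
  case Nil then show ?case using permutes_id by (simp add: id_def)
next
  case (Cons r rs)
  then obtain a b where r: "r = transpose a b" "a \<in> {1..n}" "b \<in> {1..n}"
    unfolding Tr_def by auto
  have rp: "r permutes {1..n}" unfolding r(1) by (rule permutes_swap_id[OF r(2,3)])
  have "set rs \<subseteq> Tr n" using Cons.prems by simp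
  then have "foldr (\<circ>) rs id permutes {1..n}" by (rule Cons.IH)
  from permutes_compose[OF this rp] show ?case by (simp only: fC)
qed

lemma N_prod: "set rs \<subseteq> Tr n \<Longrightarrow> N n (foldr (\<circ>) rs id) \<le> length rs"
proof (induction rs)
  case Nil then show ?case unfolding fN N_id by simp
next
  case (Cons r rs)
  then obtain a b where r: "r = transpose a b" "a \<in> {1..n}" "b \<in> {1..n}"
    unfolding Tr_def by auto
  have p: "foldr (\<circ>) rs id permutes {1..n}" using Cons.prems by (intro prod_perm) simp
  have "N n (foldr (\<circ>) (r # rs) id) = N n (transpose a b \<circ> foldr (\<circ>) rs id)"
    using r by (simp only: fC)
  also have "\<dots> \<le> Suc (N n (foldr (\<circ>) rs id))" using N_lb[OF p r(2,3)] .
  also have "\<dots> \<le> length (r # rs)"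
  proof -
    have "set rs \<subseteq> Tr n" using Cons.prems by simp
    then have "N n (foldr (\<circ>) rs id) \<le> length rs" by (rule Cons.IH)
    then show ?thesis by simp
  qed
  finally show ?case .
qed

lemma factor: "w permutes {1..n} \<Longrightarrow>
   \<exists>rs. set rs \<subseteq> Tr n \<and> length rs = N n w \<and> w = foldr (\<circ>) rs id"
proof (induction n arbitrary: w)
  case 0
  then have "w = id" by (simp add: permutes_empty)
  then show ?case by (intro exI[of _ "[]"]) simp
next
  case (Suc n)
  define m where "m = Suc n"
  define q where "q = w m"
  have qm: "q \<in> {1..m}" using perm_val[OF Suc.prems(1), of m] unfolding q_def m_def by auto
  show ?case
  proof (cases "q = m")
    case True
    have w': "w permutes {1..n}" using perm_Suc_fix Suc.prems(1) True unfolding q_def m_def by blast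
    obtain rs where "set rs \<subseteq> Tr n" "length rs = N n w" "w = foldr (\<circ>) rs id"
      using Suc.IH[OF w'] by blast
    then show ?thesis using True Tr_mono unfolding q_def m_def by fastforce
  next
    case False
    have w': "transpose q m \<circ> w permutes {1..n}"
      using perm_Suc_strip[OF Suc.prems(1)] unfolding q_def m_def .
    obtain rs where rs: "set rs \<subseteq> Tr n" "length rs = N n (transpose q m \<circ> w)"
        "transpose q m \<circ> w = foldr (\<circ>) rs id"
      using Suc.IH[OF w'] by blast
    have t: "transpose q m \<in> Tr m" using qm False unfolding Tr_def m_def by fastforce
    have we: "w = transpose q m \<circ> foldr (\<circ>) rs id"
    proof -
      have e: "transpose q m \<circ> (transpose q m \<circ> w) = w" by (simp add: fun_eq_iff)
      show ?thesis using e unfolding rs(3) by simp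
    qed
    have Nw: "N m w = Suc (length rs)" using False rs(2) unfolding q_def m_def by simp
    have s1: "set (transpose q m # rs) \<subseteq> Tr m"
      using t rs(1) Tr_mono[of n] unfolding m_def by auto
    have s2: "length (transpose q m # rs) = N m w" using Nw by simp
    have s3: "w = foldr (\<circ>) (transpose q m # rs) id" unfolding fC by (rule we)
    show ?thesis using s1 s2 s3 unfolding m_def by blast
  qed
qed

lemma parity: "set rs \<subseteq> Tr n \<Longrightarrow> evenperm (foldr (\<circ>) rs id) = even (length rs)"
proof (induction rs)
  case Nil then show ?case unfolding fN by simp
next
  case (Cons r rs)
  obtain a b where r: "r = transpose a b" "a \<noteq> b"
    using Cons.prems unfolding Tr_def by auto
  have rs: "set rs \<subseteq> Tr n" using Cons.prems by simp
  have p: "permutation (foldr (\<circ>) rs id)"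
    using prod_perm[OF rs] permutation_permutes finite_atLeastAtMost by blast
  have ih: "evenperm (foldr (\<circ>) rs id) = even (length rs)" by (rule Cons.IH[OF rs])
  have "evenperm (foldr (\<circ>) (r # rs) id) = (evenperm r = evenperm (foldr (\<circ>) rs id))"
    unfolding fC r(1) by (rule evenperm_comp[OF permutation_swap_id p])
  also have "\<dots> = (\<not> even (length rs))" unfolding ih r(1) evenperm_swap using r(2) by simp
  finally show ?case by (simp only: length_Cons even_Suc)
qed

fun R :: "nat \<Rightarrow> (nat \<Rightarrow> nat) \<Rightarrow> nat" where
  "R 0 w = 0"
| "R (Suc n) w = (if n < 2 then 0 else if w (Suc n) = Suc n then R n w
     else Suc (R n (transpose (w (Suc n)) (Suc n) \<circ> w)))"

abbreviation t12 :: "nat \<Rightarrow> nat" where "t12 \<equiv> transpose 1 2"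

lemma perm2: "w permutes {1..2} \<Longrightarrow> w = id \<or> w = t12"
proof -
  assume w: "w permutes {1..2}"
  have w2: "w permutes {1..Suc 1}" using w by (simp add: numeral_2_eq_2)
  have "w 2 \<in> {1..2}" using perm_val[OF w] by simp
  then have "w 2 = 2 \<or> w 2 = 1" by auto
  then show ?thesis
  proof
    assume a: "w 2 = 2"
    have "w permutes {1..1}" using perm_Suc_fix[OF w2] a by (simp add: numeral_2_eq_2)
    then show ?thesis by simp
  next
    assume a: "w 2 = 1"
    have "transpose (w (Suc 1)) (Suc 1) \<circ> w permutes {1..1}" by (rule perm_Suc_strip[OF w2])
    then have "transpose 1 2 \<circ> w = id" using a by (simp add: numeral_2_eq_2)
    then have "t12 \<circ> (t12 \<circ> w) = t12" by (simp only: comp_id)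
    moreover have "w = t12 \<circ> (t12 \<circ> w)" by (simp add: fun_eq_iff)
    ultimately show ?thesis by simp
  qed
qed

lemma N2: "N 2 id = 0" "N 2 t12 = 1"
  by (simp_all add: numeral_2_eq_2)

lemma R2: "R 2 w = 0"
  by (simp add: numeral_2_eq_2)

lemma NR: "2 \<le> n \<Longrightarrow> w permutes {1..n} \<Longrightarrow>
  (N n w = R n w \<and> N n (w \<circ> t12) = Suc (R n w)) \<or>
  (N n w = Suc (R n w) \<and> N n (w \<circ> t12) = R n w)"
proof (induction n arbitrary: w)
  case 0 then show ?case by simp
next
  case (Suc n)
  show ?case
  proof (cases "n < 2")
    case True
    then have n2: "Suc n = 2" using Suc.prems(1) by simp
    have "w = id \<or> w = t12" using perm2 Suc.prems(2) unfolding n2 by blast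
    then show ?thesis
    proof
      assume "w = id" then show ?thesis unfolding n2 R2 by (simp only: id_comp N2) simp
    next
      assume "w = t12" then show ?thesis unfolding n2 R2 by (simp only: transpose_comp_involutory N2) simp
    qed
  next
    case False
    then have n2: "2 \<le> n" by simp
    define m where "m = Suc n"
    define q where "q = w m"
    have tm: "t12 m = m" using n2 unfolding m_def by simp
    have wt: "(w \<circ> t12) m = q" using tm unfolding q_def by simp
    show ?thesis
    proof (cases "q = m")
      case True
      have w': "w permutes {1..n}" using perm_Suc_fix Suc.prems(2) True unfolding q_def m_def by blast
      have e1: "N m w = N n w" using True unfolding q_def m_def by simp
      have e2: "N m (w \<circ> t12) = N n (w \<circ> t12)" using True wt unfolding m_def by simp
      have e3: "R m w = R n w" using True n2 unfolding q_def m_def by simp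
      show ?thesis unfolding m_def[symmetric] e1 e2 e3 using Suc.IH[OF n2 w'] by blast
    next
      case False
      have w': "transpose q m \<circ> w permutes {1..n}"
        using perm_Suc_strip[OF Suc.prems(2)] unfolding q_def m_def .
      have e1: "N m w = Suc (N n (transpose q m \<circ> w))" using False unfolding q_def m_def by simp
      have e2: "N m (w \<circ> t12) = Suc (N n (transpose q m \<circ> w \<circ> t12))"
        using False wt unfolding m_def by (simp add: o_assoc)
      have e3: "R m w = Suc (R n (transpose q m \<circ> w))" using False n2 unfolding q_def m_def by simp
      show ?thesis unfolding m_def[symmetric] e1 e2 e3 using Suc.IH[OF n2 w'] by blast
    qed
  qed
qed

lemma fA: "foldr (\<circ>) (xs @ ys) (id::'a\<Rightarrow>'a) = foldr (\<circ>) xs id \<circ> foldr (\<circ>) ys id"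
proof (induction xs)
  case Nil show ?case by (simp only: append_Nil fN id_comp)
next
  case (Cons x xs) show ?case by (simp only: append_Cons fC Cons comp_assoc)
qed

lemma fS: "foldr (\<circ>) (xs @ [g]) (id::'a\<Rightarrow>'a) = foldr (\<circ>) xs id \<circ> g"
  by (simp only: fA fC fN comp_id)

lemma conj_tr: "transpose a b \<circ> transpose i j \<circ> transpose a b = transpose (transpose a b i) (transpose a b j)"
  by (auto simp: fun_eq_iff transpose_def)

lemma t12_in: "2 \<le> n \<Longrightarrow> x \<in> {1..n} \<Longrightarrow> t12 x \<in> {1..n}"
  by (auto simp: transpose_def)

lemma T_mem: "a \<noteq> b \<Longrightarrow> a \<in> {1..n} \<Longrightarrow> b \<in> {1..n} \<Longrightarrow> t12 \<circ> transpose a b \<in> T_alt n"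
proof -
  assume ab: "a \<noteq> b" "a \<in> {1..n}" "b \<in> {1..n}"
  show ?thesis
  proof (cases "a < b")
    case True then show ?thesis using ab unfolding T_alt_def by auto
  next
    case False
    then have ba: "b < a" using ab by simp
    have e: "t12 \<circ> transpose a b = t12 \<circ> transpose b a" by (simp add: transpose_commute)
    show ?thesis unfolding T_alt_def mem_Collect_eq e
      by (rule exI[of _ b], rule exI[of _ a]) (use ba ab in auto)
  qed
qed

lemma t12t12: "t12 \<circ> t12 \<circ> f = f" "f \<circ> t12 \<circ> t12 = f"
  by (simp_all add: fun_eq_iff)

lemma T_to_Tr: "2 \<le> n \<Longrightarrow> set ts \<subseteq> T_alt n \<Longrightarrow>
  \<exists>rs. length rs = length ts \<and> set rs \<subseteq> Tr n \<and>
    foldr (\<circ>) rs id = (if even (length ts) then foldr (\<circ>) ts id else foldr (\<circ>) ts id \<circ> t12)"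
proof (induction ts rule: rev_induct)
  case Nil then show ?case by (intro exI[of _ "[]"]) simp
next
  case (snoc g ts)
  have ts: "set ts \<subseteq> T_alt n" using snoc.prems by simp
  obtain rs where rs: "length rs = length ts" "set rs \<subseteq> Tr n"
    "foldr (\<circ>) rs id = (if even (length ts) then foldr (\<circ>) ts id else foldr (\<circ>) ts id \<circ> t12)"
    using snoc.IH[OF snoc.prems(1) ts] by blast
  have "g \<in> T_alt n" using snoc.prems by simp
  then obtain i j where g: "g = t12 \<circ> transpose i j" "1 \<le> i" "i < j" "j \<le> n"
    unfolding T_alt_def by blast
  show ?case
  proof (cases "even (length ts)")
    case True
    define r where "r = transpose (t12 i) (t12 j)"
    have i1: "t12 i \<in> {1..n}" "t12 j \<in> {1..n}" using g t12_in[OF snoc.prems(1)] by auto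
    have i2: "t12 i \<noteq> t12 j" using g(3) transpose_eq_imp_eq by (metis less_irrefl)
    have r: "r \<in> Tr n" unfolding r_def Tr_def mem_Collect_eq
      by (rule exI[of _ "t12 i"], rule exI[of _ "t12 j"]) (use i1 i2 in auto)
    have "foldr (\<circ>) (rs @ [r]) id = foldr (\<circ>) ts id \<circ> (t12 \<circ> transpose i j \<circ> t12)"
      unfolding fS rs(3) r_def conj_tr using True by simp
    also have "\<dots> = foldr (\<circ>) (ts @ [g]) id \<circ> t12" unfolding fS g(1) by (simp add: comp_assoc)
    finally have E: "foldr (\<circ>) (rs @ [r]) id = foldr (\<circ>) (ts @ [g]) id \<circ> t12" .
    have P: "\<not> even (length (ts @ [g]))" using True by simp
    have L: "length (rs @ [r]) = length (ts @ [g])" using rs(1) by simp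
    have S: "set (rs @ [r]) \<subseteq> Tr n" using rs(2) r by simp
    show ?thesis unfolding if_not_P[OF P] using E L S by blast
  next
    case False
    define r where "r = transpose i j"
    have r: "r \<in> Tr n" unfolding r_def Tr_def mem_Collect_eq
      by (rule exI[of _ i], rule exI[of _ j]) (use g in auto)
    have "foldr (\<circ>) (rs @ [r]) id = foldr (\<circ>) ts id \<circ> t12 \<circ> transpose i j"
      unfolding fS rs(3) using False r_def by simp
    also have "\<dots> = foldr (\<circ>) (ts @ [g]) id" unfolding fS g(1) by (simp add: comp_assoc)
    finally have E: "foldr (\<circ>) (rs @ [r]) id = foldr (\<circ>) (ts @ [g]) id" .
    have P: "even (length (ts @ [g]))" using False by simp
    have L: "length (rs @ [r]) = length (ts @ [g])" using rs(1) by simp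
    have S: "set (rs @ [r]) \<subseteq> Tr n" using rs(2) r by simp
    show ?thesis unfolding if_P[OF P] using E L S by blast
  qed
qed

lemma Tr_to_T: "2 \<le> n \<Longrightarrow> set rs \<subseteq> Tr n \<Longrightarrow>
  \<exists>ts. length ts = length rs \<and> set ts \<subseteq> T_alt n \<and>
    foldr (\<circ>) ts id = (if even (length rs) then foldr (\<circ>) rs id else foldr (\<circ>) rs id \<circ> t12)"
proof (induction rs rule: rev_induct)
  case Nil then show ?case by (intro exI[of _ "[]"]) simp
next
  case (snoc r rs)
  have rs': "set rs \<subseteq> Tr n" using snoc.prems by simp
  obtain ts where ts: "length ts = length rs" "set ts \<subseteq> T_alt n"
    "foldr (\<circ>) ts id = (if even (length rs) then foldr (\<circ>) rs id else foldr (\<circ>) rs id \<circ> t12)"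
    using snoc.IH[OF snoc.prems(1) rs'] by blast
  have "r \<in> Tr n" using snoc.prems by simp
  then obtain a b where r: "r = transpose a b" "a \<in> {1..n}" "b \<in> {1..n}" "a \<noteq> b"
    unfolding Tr_def by blast
  show ?case
  proof (cases "even (length rs)")
    case True
    define g where "g = t12 \<circ> transpose (t12 a) (t12 b)"
    have g: "g \<in> T_alt n" unfolding g_def
      using T_mem t12_in[OF snoc.prems(1)] r by (metis transpose_eq_imp_eq)
    have "foldr (\<circ>) (ts @ [g]) id = foldr (\<circ>) rs id \<circ> (t12 \<circ> (t12 \<circ> r \<circ> t12))"
      unfolding fS ts(3) g_def r(1) conj_tr using True by simp
    also have "\<dots> = foldr (\<circ>) (rs @ [r]) id \<circ> t12" unfolding fS by (simp add: fun_eq_iff)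
    finally have E: "foldr (\<circ>) (ts @ [g]) id = foldr (\<circ>) (rs @ [r]) id \<circ> t12" .
    have P: "\<not> even (length (rs @ [r]))" using True by simp
    have L: "length (ts @ [g]) = length (rs @ [r])" using ts(1) by simp
    have S: "set (ts @ [g]) \<subseteq> T_alt n" using ts(2) g by simp
    show ?thesis unfolding if_not_P[OF P] using E L S by blast
  next
    case False
    define g where "g = t12 \<circ> r"
    have g: "g \<in> T_alt n" unfolding g_def using T_mem r by blast
    have "foldr (\<circ>) (ts @ [g]) id = foldr (\<circ>) rs id \<circ> t12 \<circ> (t12 \<circ> r)"
      unfolding fS ts(3) g_def using False by simp
    also have "\<dots> = foldr (\<circ>) (rs @ [r]) id" unfolding fS by (simp add: fun_eq_iff)
    finally have E: "foldr (\<circ>) (ts @ [g]) id = foldr (\<circ>) (rs @ [r]) id" .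
    have P: "even (length (rs @ [r]))" using False by simp
    have L: "length (ts @ [g]) = length (rs @ [r])" using ts(1) by simp
    have S: "set (ts @ [g]) \<subseteq> T_alt n" using ts(2) g by simp
    show ?thesis unfolding if_P[OF P] using E L S by blast
  qed
qed

lemma R_le_N: "2 \<le> n \<Longrightarrow> w permutes {1..n} \<Longrightarrow> R n w \<le> N n w \<and> R n w \<le> N n (w \<circ> t12)"
  using NR by fastforce

lemma t12_perm: "2 \<le> n \<Longrightarrow> t12 permutes {1..n}"
  by (rule permutes_swap_id) auto

lemma lenT_R:
  assumes n: "2 \<le> n" and v: "v \<in> alt_grp n"
  shows "lenT n v = R n v"
proof -
  have vp: "v permutes {1..n}" and ve: "evenperm v" using v unfolding alt_grp_def by auto
  have vtp: "v \<circ> t12 permutes {1..n}" using permutes_compose[OF t12_perm[OF n] vp] .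
  have pv: "permutation v" using vp permutation_permutes by blast
  have ex: "\<exists>ts. length ts = R n v \<and> set ts \<subseteq> T_alt n \<and> v = foldr (\<circ>) ts id"
    using NR[OF n vp]
  proof
    assume a: "N n v = R n v \<and> N n (v \<circ> t12) = Suc (R n v)"
    obtain rs where rs: "set rs \<subseteq> Tr n" "length rs = N n v" "v = foldr (\<circ>) rs id"
      using factor[OF vp] by blast
    have ev: "even (length rs)" using parity[OF rs(1)] rs(3) ve by simp
    obtain ts where ts: "length ts = length rs" "set ts \<subseteq> T_alt n"
      "foldr (\<circ>) ts id = (if even (length rs) then foldr (\<circ>) rs id else foldr (\<circ>) rs id \<circ> t12)"
      using Tr_to_T[OF n rs(1)] by blast
    have "v = foldr (\<circ>) ts id" using ts(3) ev rs(3) by simp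
    then show ?thesis using ts(1,2) rs(2) a by auto
  next
    assume a: "N n v = Suc (R n v) \<and> N n (v \<circ> t12) = R n v"
    obtain rs where rs: "set rs \<subseteq> Tr n" "length rs = N n (v \<circ> t12)" "v \<circ> t12 = foldr (\<circ>) rs id"
      using factor[OF vtp] by blast
    have "evenperm (v \<circ> t12) = False"
      using evenperm_comp[OF pv permutation_swap_id[of 1 2]] ve evenperm_swap[of "1::nat" 2] by simp
    then have ev: "\<not> even (length rs)" using parity[OF rs(1)] rs(3) by simp
    obtain ts where ts: "length ts = length rs" "set ts \<subseteq> T_alt n"
      "foldr (\<circ>) ts id = (if even (length rs) then foldr (\<circ>) rs id else foldr (\<circ>) rs id \<circ> t12)"
      using Tr_to_T[OF n rs(1)] by blast
    have "foldr (\<circ>) ts id = v \<circ> t12 \<circ> t12" using ts(3) ev rs(3) by simp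
    then have "v = foldr (\<circ>) ts id" by (simp only: t12t12)
    then show ?thesis using ts(1,2) rs(2) a by auto
  qed
  have lb: "R n v \<le> r" if h: "\<exists>ts. length ts = r \<and> set ts \<subseteq> T_alt n \<and> v = foldr (\<circ>) ts id" for r
  proof -
    obtain ts where ts: "length ts = r" "set ts \<subseteq> T_alt n" "v = foldr (\<circ>) ts id" using h by blast
    obtain rs where rs: "length rs = length ts" "set rs \<subseteq> Tr n"
      "foldr (\<circ>) rs id = (if even (length ts) then foldr (\<circ>) ts id else foldr (\<circ>) ts id \<circ> t12)"
      using T_to_Tr[OF n ts(2)] by blast
    have Nb: "N n (foldr (\<circ>) rs id) \<le> r" using N_prod[OF rs(2)] rs(1) ts(1) by simp
    show ?thesis
    proof (cases "even (length ts)")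
      case True
      then have "foldr (\<circ>) rs id = v" using rs(3) ts(3) by simp
      then show ?thesis using Nb R_le_N[OF n vp] by simp
    next
      case False
      then have "foldr (\<circ>) rs id = v \<circ> t12" using rs(3) ts(3) by simp
      then show ?thesis using Nb R_le_N[OF n vp] by simp
    qed
  qed
  show ?thesis unfolding lenT_def
    by (rule Least_equality) (use ex lb in auto)
qed

lemma Rstep:
  assumes n: "2 \<le> n" and q: "q permutes {1..n}" and b: "b \<in> {1..Suc n}"
  shows "R (Suc n) (transpose (Suc n) b \<circ> q) = (if b = Suc n then R n q else Suc (R n q))"
proof -
  have qm: "q (Suc n) = Suc n" using permutes_not_in[OF q] by simp
  have nn: "\<not> n < 2" using n by simp
  show ?thesis
  proof (cases "b = Suc n")
    case True
    then have "transpose (Suc n) b \<circ> q = q" by simp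
    then show ?thesis using qm nn True by (simp only: R.simps if_False if_True)
  next
    case False
    have v: "(transpose (Suc n) b \<circ> q) (Suc n) = b" using qm by simp
    have e: "transpose b (Suc n) \<circ> (transpose (Suc n) b \<circ> q) = q"
      by (rule ext) (simp add: transpose_def)
    show ?thesis unfolding R.simps v e using False nn by simp
  qed
qed

lemma perm_of: "q permutes {1..(n::nat)} \<Longrightarrow> permutation q"
  using permutation_permutes finite_atLeastAtMost by blast

lemma Estep: "q permutes {1..(n::nat)} \<Longrightarrow> evenperm (transpose m b \<circ> q) = ((m = b) = evenperm q)"
proof -
  assume q: "q permutes {1..n}"
  have e1: "evenperm (transpose m b \<circ> q) = (evenperm (transpose m b) = evenperm q)"
    by (rule evenperm_comp[OF permutation_swap_id perm_of[OF q]])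
  show ?thesis unfolding e1 evenperm_swap ..
qed

lemma count:
  fixes x :: "'a :: comm_ring_1"
  shows "2 \<le> n \<Longrightarrow> (\<Sum>p\<in>{p. p permutes {1..n}}. if evenperm p = e then x ^ R n p else 0)
    = (\<Prod>t=2..n-1. 1 + of_nat t * x)"
proof (induction n arbitrary: e)
  case 0 then show ?case by simp
next
  case (Suc n)
  have ins: "{1..Suc n} = insert (Suc n) {1..n}" by auto
  have nin: "Suc n \<notin> {1..n}" by simp
  show ?case
  proof (cases "n < 2")
    case True
    then have n1: "n = 1" using Suc.prems by simp
    have P1: "{p. p permutes {1..1::nat}} = {id}" by simp
    have "(\<Sum>p\<in>{p. p permutes {1..Suc n}}. if evenperm p = e then x ^ R (Suc n) p else 0)
       = (\<Sum>b\<in>insert (Suc n) {1..n}. \<Sum>q\<in>{p. p permutes {1..n}}.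
            (\<lambda>p. if evenperm p = e then x ^ R (Suc n) p else 0) (transpose (Suc n) b \<circ> q))"
      unfolding ins by (rule sum_over_permutations_insert) (use nin in auto)
    also have "\<dots> = (if evenperm (id::nat\<Rightarrow>nat) = e then 1 else 0) + (if evenperm (transpose (2::nat) 1) = e then 1 else 0)"
      unfolding n1 P1 by (simp add: R2 numeral_2_eq_2)
    also have "\<dots> = 1" by (cases e) (simp_all add: evenperm_swap)
    finally show ?thesis using n1 by simp
  next
    case False
    then have n2: "2 \<le> n" by simp
    define P where "P = (\<Prod>t=2..n-1. 1 + of_nat t * (x::'a))"
    have inner: "(\<Sum>q\<in>{p. p permutes {1..n}}.
            (\<lambda>p. if evenperm p = e then x ^ R (Suc n) p else 0) (transpose (Suc n) b \<circ> q))
          = (if b = Suc n then 1 else x) * P" if b: "b \<in> insert (Suc n) {1..n}" for b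
    proof -
      have "(\<Sum>q\<in>{p. p permutes {1..n}}.
            (\<lambda>p. if evenperm p = e then x ^ R (Suc n) p else 0) (transpose (Suc n) b \<circ> q))
         = (\<Sum>q\<in>{p. p permutes {1..n}}. (if b = Suc n then 1 else x) *
              (if evenperm q = ((Suc n = b) = e) then x ^ R n q else 0))"
      proof (rule sum.cong)
        fix q assume "q \<in> {p. p permutes {1..n}}"
        then have q: "q permutes {1..n}" by simp
        show "(\<lambda>p. if evenperm p = e then x ^ R (Suc n) p else 0) (transpose (Suc n) b \<circ> q)
          = (if b = Suc n then 1 else x) * (if evenperm q = ((Suc n = b) = e) then x ^ R n q else 0)"
        proof -
          have bb: "b \<in> {1..Suc n}" using b ins by simp
          have r: "R (Suc n) (transpose (Suc n) b \<circ> q) = (if b = Suc n then R n q else Suc (R n q))"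
            by (rule Rstep[OF n2 q bb])
          show ?thesis unfolding r Estep[OF q, of "Suc n" b]
            by (cases "b = Suc n"; cases e; cases "evenperm q") simp_all
        qed
      qed simp
      also have "\<dots> = (if b = Suc n then 1 else x) * P"
        unfolding sum_distrib_left[symmetric] P_def using Suc.IH[OF n2] by simp
      finally show ?thesis .
    qed
    have "(\<Sum>p\<in>{p. p permutes {1..Suc n}}. if evenperm p = e then x ^ R (Suc n) p else 0)
       = (\<Sum>b\<in>insert (Suc n) {1..n}. \<Sum>q\<in>{p. p permutes {1..n}}.
            (\<lambda>p. if evenperm p = e then x ^ R (Suc n) p else 0) (transpose (Suc n) b \<circ> q))"
      unfolding ins by (rule sum_over_permutations_insert) (use nin in auto)
    also have "\<dots> = (\<Sum>b\<in>insert (Suc n) {1..n}. (if b = Suc n then 1 else x) * P)"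
      by (rule sum.cong) (use inner in auto)
    also have "\<dots> = P + (\<Sum>b\<in>{1..n}. x * P)"
      using nin by (simp add: sum.insert)
    also have "\<dots> = P + of_nat n * (x * P)" by simp
    also have "\<dots> = (\<Prod>t=2..n. 1 + of_nat t * x)"
    proof -
      have e: "{2..n} = insert n {2..n-1}" using n2 by auto
      have "(\<Prod>t=2..n. 1 + of_nat t * x) = (1 + of_nat n * x) * P"
        unfolding e P_def by (subst prod.insert) auto
      then show ?thesis by (simp add: algebra_simps)
    qed
    finally show ?thesis by simp
  qed
qed

lemma R_le: "R n w \<le> n"
proof (induction n arbitrary: w)
  case 0 then show ?case by simp
next
  case (Suc n)
  have "R n w \<le> n" "R n (transpose (w (Suc n)) (Suc n) \<circ> w) \<le> n" using Suc.IH by blast+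
  then show ?case by (simp only: R.simps) (auto split: if_splits)
qed

theorem theorem7p2:
  fixes x :: "'a :: comm_ring_1" and n :: nat
  assumes "n \<ge> 2"
  shows "(\<Sum>v\<in>alt_grp n. x ^ lenT n v) = (\<Sum>k=0..n. of_nat (a_cnt n k) * x ^ k)
    \<and> (\<Sum>k=0..n. of_nat (a_cnt n k) * x ^ k) = (\<Prod>t=2..n-1. 1 + of_nat t * x)"
proof -
  have n: "2 \<le> n" using assms .
  have A: "alt_grp n = {p \<in> {p. p permutes {1..n}}. evenperm p}" unfolding alt_grp_def by auto
  have fin: "finite {p. p permutes {1..n}}" by (rule finite_permutations) simp
  have finA: "finite (alt_grp n)" unfolding A using fin by simp
  have S1: "(\<Sum>v\<in>alt_grp n. x ^ lenT n v) = (\<Sum>v\<in>alt_grp n. x ^ R n v)"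
    by (rule sum.cong) (simp_all add: lenT_R[OF n])
  have S2: "(\<Sum>v\<in>alt_grp n. x ^ R n v) = (\<Prod>t=2..n-1. 1 + of_nat t * x)"
  proof -
    have "(\<Sum>v\<in>alt_grp n. x ^ R n v)
        = (\<Sum>p\<in>{p. p permutes {1..n}}. if evenperm p = True then x ^ R n p else 0)"
      unfolding A sum.inter_filter[OF fin] by simp
    also have "\<dots> = (\<Prod>t=2..n-1. 1 + of_nat t * x)" by (rule count[OF n])
    finally show ?thesis .
  qed
  have G: "(\<Sum>k=0..n. of_nat (a_cnt n k) * x ^ k) = (\<Sum>v\<in>alt_grp n. x ^ lenT n v)"
  proof -
    have "(\<Sum>k=0..n. of_nat (a_cnt n k) * x ^ k)
        = (\<Sum>k=0..n. \<Sum>v\<in>{v. v \<in> alt_grp n \<and> lenT n v = k}. x ^ lenT n v)"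
    proof (rule sum.cong)
      fix k assume "k \<in> {0..n}"
      have "(\<Sum>v\<in>{v. v \<in> alt_grp n \<and> lenT n v = k}. x ^ lenT n v)
          = (\<Sum>v\<in>{v. v \<in> alt_grp n \<and> lenT n v = k}. x ^ k)"
        by (rule sum.cong) simp_all
      also have "\<dots> = of_nat (a_cnt n k) * x ^ k" unfolding a_cnt_def by simp
      finally show "of_nat (a_cnt n k) * x ^ k = (\<Sum>v\<in>{v. v \<in> alt_grp n \<and> lenT n v = k}. x ^ lenT n v)" by simp
    qed simp
    also have "\<dots> = (\<Sum>v\<in>alt_grp n. x ^ lenT n v)"
    proof (rule sum.group[OF finA])
      show "finite {0..n}" by simp
      show "lenT n ` alt_grp n \<subseteq> {0..n}"
        using lenT_R[OF n] R_le by auto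
    qed
    finally show ?thesis .
  qed
  show ?thesis using S1 S2 G by simp
qed

end
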